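(* Let $0<p<1$ and $\alpha>-1$, and consider the urn transfer process described in the context (the $p_k$-model), assumed well defined, i.e. $0\le p_{k+1}\le 1$ at every stage. Let $B(k)=\sum_{i\ge 1}F_i(k)$ be the total number of balls after $k$ steps. Then for every integer $k>1$, $$E(B(k)) = E\Big(\sum_{i=1}^k F_i(k)\Big) = 1+(k-1)p \quad\text{and}\quad E(p_k)=p.$$
   Context: Urn transfer model ($p_k$-model). There are countably many urns $urn_1,urn_2,\dots$; each ball in $urn_i$ carries $i$ pins. Let $F_i(k)$ be the number of balls in $urn_i$ after $k$ steps. Initially (stage $k=1$) $F_1(1)=1$ and $F_i(1)=0$ for $i>1$. Fix parameters $0<p<1$ and $\alpha>-1$. At stage $k+1$ ($k\ge1$) one of two things happens: (i) with probability $$p_{k+1}=1-\frac{(1-p)\sum_{i=1}^k (i+\alpha)F_i(k)}{k(1+\alpha p)+\alpha(1-p)},$$ a new ball (with one pin) is added to $urn_1$; (ii) with probability $1-p_{k+1}$, an urn is selected, $urn_i$ being chosen with probability $\frac{(1-p)(i+\alpha)F_i(k)}{k(1+\alpha p)+\alpha(1-p)}$ for $1\le i\le k$, and one ball of $urn_i$ is moved to $urn_{i+1}$ (i.e. receives an extra pin). The process is only defined when $0\le p_{k+1}\le1$ at each stage. The total number of pins after $k$ steps is $\sum_i iF_i(k)=k$, and $F_i(k)=0$ for $i>k$. $E$ denotes expectation over the randomness of the process. *)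

theory Defs
  imports "HOL-Probability.Probability"
begin

text \<open>Urn transfer model (p_k-model). A state is F :: nat => nat, where F i is the
number of balls in urn i (i >= 1); index 0 is unused and always 0.
Stages are indexed from k = 1.\<close>

definition urn_init :: "nat \<Rightarrow> nat" where
  "urn_init = (\<lambda>i. if i = 1 then 1 else 0)"

definition urn_den :: "real \<Rightarrow> real \<Rightarrow> nat \<Rightarrow> real" where
  "urn_den p \<alpha> k = real k * (1 + \<alpha> * p) + \<alpha> * (1 - p)"

text \<open>p_{k+1}, computed from the state F = F(k) after k steps.\<close>
definition urn_pnext :: "real \<Rightarrow> real \<Rightarrow> nat \<Rightarrow> (nat \<Rightarrow> nat) \<Rightarrow> real" where
  "urn_pnext p \<alpha> k F =
     1 - (1 - p) * (\<Sum>i=1..k. (real i + \<alpha>) * real (F i)) / urn_den p \<alpha> k"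

definition urn_choose :: "real \<Rightarrow> real \<Rightarrow> nat \<Rightarrow> (nat \<Rightarrow> nat) \<Rightarrow> nat \<Rightarrow> real" where
  "urn_choose p \<alpha> k F i = (1 - p) * (real i + \<alpha>) * real (F i) / urn_den p \<alpha> k"

text \<open>Outcome of stage k+1: None = new ball in urn 1; Some i = a ball of urn i moves to urn i+1.\<close>
definition urn_step_pmf :: "real \<Rightarrow> real \<Rightarrow> nat \<Rightarrow> (nat \<Rightarrow> nat) \<Rightarrow> nat option pmf" where
  "urn_step_pmf p \<alpha> k F = embed_pmf (\<lambda>oc. case oc of
       None \<Rightarrow> urn_pnext p \<alpha> k F
     | Some i \<Rightarrow> (if 1 \<le> i \<and> i \<le> k then urn_choose p \<alpha> k F i else 0))"

definition urn_apply :: "(nat \<Rightarrow> nat) \<Rightarrow> nat option \<Rightarrow> (nat \<Rightarrow> nat)" where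
  "urn_apply F oc = (case oc of
       None \<Rightarrow> F(1 := F 1 + 1)
     | Some i \<Rightarrow> F(i := F i - 1, Suc i := F (Suc i) + 1))"

text \<open>Distribution of the state (F_i(k))_i after k steps (k >= 1; k = 0 is a dummy).\<close>
fun urn_dist :: "real \<Rightarrow> real \<Rightarrow> nat \<Rightarrow> (nat \<Rightarrow> nat) pmf" where
  "urn_dist p \<alpha> 0 = return_pmf urn_init"
| "urn_dist p \<alpha> (Suc 0) = return_pmf urn_init"
| "urn_dist p \<alpha> (Suc (Suc k)) =
     urn_dist p \<alpha> (Suc k) \<bind> (\<lambda>F. map_pmf (urn_apply F) (urn_step_pmf p \<alpha> (Suc k) F))"

end

theory Submission
  imports Defs
begin

lemma exp_cong_pmf:
  assumes "\<And>x. x \<in> set_pmf M \<Longrightarrow> f x = g x"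
  shows "measure_pmf.expectation M f = measure_pmf.expectation M (g::_\<Rightarrow>real)"
  using assms by (intro integral_cong_AE) (auto simp: AE_measure_pmf_iff)

lemma exp_affine:
  assumes "finite (set_pmf M)"
  shows "measure_pmf.expectation M (\<lambda>x. a + b * (g x::real)) = a + b * measure_pmf.expectation M g"
proof -
  have i: "integrable (measure_pmf M) g" using assms by (rule integrable_measure_pmf_finite)
  show ?thesis
    by (subst Bochner_Integration.integral_add) (use i in auto)
qed

lemma exp_bind_fin:
  fixes f :: "'b \<Rightarrow> real"
  assumes fM: "finite (set_pmf M)" and fN: "\<And>x. x\<in>set_pmf M \<Longrightarrow> finite (set_pmf (N x))"
  shows "measure_pmf.expectation (bind_pmf M N) f
       = measure_pmf.expectation M (\<lambda>x. measure_pmf.expectation (N x) f)"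
proof -
  define S where "S = set_pmf (bind_pmf M N)"
  have fS: "finite S" using fM fN by (auto simp: S_def)
  have pb: "pmf (bind_pmf M N) y = (\<Sum>x\<in>set_pmf M. pmf (N x) y * pmf M x)" for y
    unfolding pmf_bind by (rule integral_measure_pmf_real[OF fM]) auto
  have "measure_pmf.expectation (bind_pmf M N) f = (\<Sum>y\<in>S. f y * pmf (bind_pmf M N) y)"
    by (rule integral_measure_pmf_real[OF fS]) (auto simp: S_def)
  also have "\<dots> = (\<Sum>y\<in>S. \<Sum>x\<in>set_pmf M. f y * pmf (N x) y * pmf M x)"
    by (simp add: pb sum_distrib_left mult.assoc)
  also have "\<dots> = (\<Sum>x\<in>set_pmf M. (\<Sum>y\<in>S. f y * pmf (N x) y) * pmf M x)"
    by (subst sum.swap) (simp add: sum_distrib_right)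
  also have "\<dots> = (\<Sum>x\<in>set_pmf M. measure_pmf.expectation (N x) f * pmf M x)"
  proof (rule sum.cong[OF refl])
    fix x assume x: "x \<in> set_pmf M"
    have "measure_pmf.expectation (N x) f = (\<Sum>y\<in>S. f y * pmf (N x) y)"
      by (rule integral_measure_pmf_real[OF fS]) (use x in \<open>auto simp: S_def\<close>)
    then show "(\<Sum>y\<in>S. f y * pmf (N x) y) * pmf M x = measure_pmf.expectation (N x) f * pmf M x"
      by simp
  qed
  also have "\<dots> = measure_pmf.expectation M (\<lambda>x. measure_pmf.expectation (N x) f)"
    by (rule integral_measure_pmf_real[OF fM, symmetric]) auto
  finally show ?thesis .
qed

lemma sum_upd_real:
  fixes h :: "nat \<Rightarrow> nat \<Rightarrow> real"
  assumes "finite A" "a \<in> A"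
  shows "(\<Sum>i\<in>A. h i ((F(a:=v)) i)) = (\<Sum>i\<in>A. h i (F i)) - h a (F a) + h a v"
proof -
  have "(\<Sum>i\<in>A. h i ((F(a:=v)) i)) = h a v + (\<Sum>i\<in>A-{a}. h i ((F(a:=v)) i))"
    using assms by (simp add: sum.remove)
  also have "(\<Sum>i\<in>A-{a}. h i ((F(a:=v)) i)) = (\<Sum>i\<in>A-{a}. h i (F i))"
    by (rule sum.cong) auto
  also have "\<dots> = (\<Sum>i\<in>A. h i (F i)) - h a (F a)"
    using assms by (simp add: sum.remove)
  finally show ?thesis by simp
qed


lemma urn_dist_Suc:
  assumes "n \<ge> 1"
  shows "urn_dist p \<alpha> (Suc n) = urn_dist p \<alpha> n \<bind> (\<lambda>F. map_pmf (urn_apply F) (urn_step_pmf p \<alpha> n F))"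
  using assms by (cases n) auto

definition sf :: "real \<Rightarrow> real \<Rightarrow> nat \<Rightarrow> (nat \<Rightarrow> nat) \<Rightarrow> nat option \<Rightarrow> real" where
  "sf p \<alpha> k F oc = (case oc of
       None \<Rightarrow> urn_pnext p \<alpha> k F
     | Some i \<Rightarrow> (if 1 \<le> i \<and> i \<le> k then urn_choose p \<alpha> k F i else 0))"

lemma step_eq: "urn_step_pmf p \<alpha> k F = embed_pmf (sf p \<alpha> k F)"
  unfolding urn_step_pmf_def sf_def by (rule refl)

lemma den_pos:
  assumes "0 < p" "p < 1" "\<alpha> > -1" "k \<ge> 1"
  shows "urn_den p \<alpha> k > 0"
proof -
  define X where "X = real k * p + 1 - p"
  have "real k * p \<ge> 0" using assms by simp
  then have X: "X > 0" using assms unfolding X_def by linarith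
  have "(\<alpha> + 1) * X > 0" using X assms by (intro mult_pos_pos) auto
  moreover have "real k * (1 + \<alpha> * p) + \<alpha> * (1 - p) = real k + \<alpha> * X"
    by (simp add: X_def algebra_simps)
  moreover have "real k - X = (real k - 1) * (1 - p)" by (simp add: X_def algebra_simps)
  moreover have "(real k - 1) * (1 - p) \<ge> 0" using assms by simp
  ultimately show ?thesis unfolding urn_den_def by (simp add: algebra_simps)
qed

lemma sf_sum:
  "(\<Sum>oc\<in>insert None (Some ` {1..k}). sf p \<alpha> k F oc) = 1"
proof -
  have "(\<Sum>oc\<in>insert None (Some ` {1..k}). sf p \<alpha> k F oc)
      = urn_pnext p \<alpha> k F + (\<Sum>i\<in>{1..k}. urn_choose p \<alpha> k F i)"
    by (subst sum.insert) (auto simp: sum.reindex sf_def)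
  also have "(\<Sum>i\<in>{1..k}. urn_choose p \<alpha> k F i)
      = (1 - p) * (\<Sum>i=1..k. (real i + \<alpha>) * real (F i)) / urn_den p \<alpha> k"
    unfolding urn_choose_def by (simp add: sum_divide_distrib sum_distrib_left mult.assoc)
  finally show ?thesis unfolding urn_pnext_def by simp
qed

definition Bn :: "nat \<Rightarrow> (nat \<Rightarrow> nat) \<Rightarrow> real" where
  "Bn n F = (\<Sum>i=1..n. real (F i))"

definition urn_inv :: "nat \<Rightarrow> (nat \<Rightarrow> nat) \<Rightarrow> bool" where
  "urn_inv n F \<longleftrightarrow> F 0 = 0 \<and> (\<forall>i>n. F i = 0) \<and> (\<Sum>i=1..n. real i * real (F i)) = real n"

context
  fixes p \<alpha> :: real
  assumes p0: "0 < p" and p1: "p < 1" and a1: "\<alpha> > -1"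
    and wd: "\<forall>j\<ge>1. \<forall>F\<in>set_pmf (urn_dist p \<alpha> j).
                          0 \<le> urn_pnext p \<alpha> j F \<and> urn_pnext p \<alpha> j F \<le> 1"
begin

lemma sf_nonneg:
  assumes "k \<ge> 1" "F \<in> set_pmf (urn_dist p \<alpha> k)"
  shows "0 \<le> sf p \<alpha> k F oc"
proof (cases oc)
  case None then show ?thesis using wd assms by (auto simp: sf_def)
next
  case (Some i)
  have d: "urn_den p \<alpha> k > 0" using den_pos[OF p0 p1 a1 assms(1)] .
  show ?thesis
  proof (cases "1 \<le> i \<and> i \<le> k")
    case True
    then have "real i \<ge> 1" by simp
    then have "real i + \<alpha> > 0" using a1 by linarith
    then show ?thesis using Some True d p1 unfolding sf_def urn_choose_def by simp
  next
    case False then show ?thesis unfolding Some sf_def by auto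
  qed
qed

lemma step_pmf:
  assumes "k \<ge> 1" "F \<in> set_pmf (urn_dist p \<alpha> k)"
  shows "pmf (urn_step_pmf p \<alpha> k F) oc = sf p \<alpha> k F oc"
proof -
  have nn: "\<And>x. 0 \<le> sf p \<alpha> k F x" using sf_nonneg[OF assms] .
  have "(\<integral>\<^sup>+x. ennreal (sf p \<alpha> k F x) \<partial>count_space UNIV)
       = (\<Sum>x\<in>insert None (Some ` {1..k}). ennreal (sf p \<alpha> k F x))"
    by (rule nn_integral_count_space') (auto simp: sf_def split: option.splits)
  also have "\<dots> = ennreal (\<Sum>x\<in>insert None (Some ` {1..k}). sf p \<alpha> k F x)"
    using nn by (simp add: sum_ennreal)
  also have "\<dots> = 1" unfolding sf_sum by simp
  finally have pr: "(\<integral>\<^sup>+x. ennreal (sf p \<alpha> k F x) \<partial>count_space UNIV) = 1" .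
  show ?thesis unfolding step_eq by (rule pmf_embed_pmf[OF nn pr])
qed

lemma step_support:
  assumes "k \<ge> 1" "F \<in> set_pmf (urn_dist p \<alpha> k)" "oc \<in> set_pmf (urn_step_pmf p \<alpha> k F)"
  shows "oc = None \<or> (\<exists>i. oc = Some i \<and> 1 \<le> i \<and> i \<le> k \<and> F i > 0)"
proof (cases oc)
  case (Some i)
  have "sf p \<alpha> k F oc \<noteq> 0" using assms step_pmf[OF assms(1,2)] by (simp add: set_pmf_eq)
  then show ?thesis using Some by (auto simp: sf_def urn_choose_def split: if_splits)
qed simp

lemma step_finite:
  assumes "k \<ge> 1" "F \<in> set_pmf (urn_dist p \<alpha> k)"
  shows "finite (set_pmf (urn_step_pmf p \<alpha> k F))"
proof (rule finite_subset)
  show "set_pmf (urn_step_pmf p \<alpha> k F) \<subseteq> insert None (Some ` {1..k})"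
    using step_support[OF assms] by fastforce
qed simp

lemma inv_step:
  assumes "n \<ge> 1" "urn_inv n F" "oc = None \<or> (\<exists>i. oc = Some i \<and> 1 \<le> i \<and> i \<le> n \<and> F i > 0)"
  shows "urn_inv (Suc n) (urn_apply F oc)
     \<and> (\<Sum>i=1..Suc n. real (urn_apply F oc i)) = (\<Sum>i=1..n. real (F i)) + (if oc = None then 1 else 0)"
proof -
  have F0: "F 0 = 0" and Fbig: "\<And>i. i > n \<Longrightarrow> F i = 0"
    and Fs: "(\<Sum>i=1..n. real i * real (F i)) = real n" using assms(2) unfolding urn_inv_def by auto
  have ext: "(\<Sum>j=1..Suc n. h j (F j)) = (\<Sum>j=1..n. h j (F j))" if "\<And>j. h j 0 = 0" for h :: "nat \<Rightarrow> nat \<Rightarrow> real"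
    using that Fbig[of "Suc n"] by (simp add: sum.cl_ivl_Suc)
  have e1: "(\<Sum>j=1..Suc n. real j * real (F j)) = real n" using ext[of "\<lambda>j v. real j * real v"] Fs by simp
  have e2: "(\<Sum>j=1..Suc n. real (F j)) = (\<Sum>j=1..n. real (F j))" using ext[of "\<lambda>j v. real v"] by simp
  show ?thesis
  proof (cases oc)
    case None
    have G: "urn_apply F oc = F(1 := F 1 + 1)" by (simp add: None urn_apply_def)
    have s1: "(\<Sum>j=1..Suc n. real j * real ((F(1 := F 1 + 1)) j)) = real (Suc n)"
      using sum_upd_real[of "{1..Suc n}" 1 "\<lambda>j v. real j * real v" F "F 1 + 1"] e1 by simp
    have s2: "(\<Sum>j=1..Suc n. real ((F(1 := F 1 + 1)) j)) = (\<Sum>j=1..n. real (F j)) + 1"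
      using sum_upd_real[of "{1..Suc n}" 1 "\<lambda>j v. real v" F "F 1 + 1"] e2 by simp
    show ?thesis unfolding G urn_inv_def using s1 s2 F0 Fbig None by auto
  next
    case (Some i)
    then have i: "1 \<le> i" "i \<le> n" "F i > 0" using assms(3) by auto
    define F1 where "F1 = F(i := F i - 1)"
    have G: "urn_apply F oc = F1(Suc i := F (Suc i) + 1)" by (simp add: Some urn_apply_def F1_def)
    have F1s: "F1 (Suc i) = F (Suc i)" by (simp add: F1_def)
    have mem: "i \<in> {1..Suc n}" "Suc i \<in> {1..Suc n}" using i by auto
    have r: "real (F i - 1) = real (F i) - 1" using i by (simp add: of_nat_diff)
    have s1: "(\<Sum>j=1..Suc n. real j * real ((F1(Suc i := F (Suc i) + 1)) j)) = real (Suc n)"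
      using sum_upd_real[of "{1..Suc n}" "Suc i" "\<lambda>j v. real j * real v" F1 "F (Suc i) + 1"]
        sum_upd_real[of "{1..Suc n}" i "\<lambda>j v. real j * real v" F "F i - 1"] e1 mem F1s r
      unfolding F1_def[symmetric] by (simp add: algebra_simps)
    have s2: "(\<Sum>j=1..Suc n. real ((F1(Suc i := F (Suc i) + 1)) j)) = (\<Sum>j=1..n. real (F j))"
      using sum_upd_real[of "{1..Suc n}" "Suc i" "\<lambda>j v. real v" F1 "F (Suc i) + 1"]
        sum_upd_real[of "{1..Suc n}" i "\<lambda>j v. real v" F "F i - 1"] e2 mem F1s r
      unfolding F1_def[symmetric] by (simp add: algebra_simps)
    have g0: "(F1(Suc i := F (Suc i) + 1)) 0 = 0" using F0 i by (simp add: F1_def)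
    have gb: "(F1(Suc i := F (Suc i) + 1)) j = 0" if "j > Suc n" for j
      using that Fbig i by (simp add: F1_def)
    show ?thesis unfolding G urn_inv_def using s1 s2 g0 gb Some by auto
  qed
qed

lemma dist_inv:
  "n \<ge> 1 \<Longrightarrow> finite (set_pmf (urn_dist p \<alpha> n)) \<and> (\<forall>F\<in>set_pmf (urn_dist p \<alpha> n). urn_inv n F)"
proof (induction n)
  case 0 then show ?case by simp
next
  case (Suc n)
  show ?case
  proof (cases "n = 0")
    case True then show ?thesis by (simp add: urn_inv_def urn_init_def)
  next
    case False
    then have n1: "n \<ge> 1" by simp
    from Suc.IH[OF n1] have fin: "finite (set_pmf (urn_dist p \<alpha> n))"
      and iv: "\<forall>F\<in>set_pmf (urn_dist p \<alpha> n). urn_inv n F" by auto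
    have f2: "finite (set_pmf (urn_dist p \<alpha> (Suc n)))"
      unfolding urn_dist_Suc[OF n1] set_bind_pmf set_map_pmf
      using fin step_finite[OF n1] by blast
    have "urn_inv (Suc n) G" if G: "G \<in> set_pmf (urn_dist p \<alpha> (Suc n))" for G
    proof -
      obtain F oc where F: "F \<in> set_pmf (urn_dist p \<alpha> n)"
        and oc: "oc \<in> set_pmf (urn_step_pmf p \<alpha> n F)" and G': "G = urn_apply F oc"
        using G unfolding urn_dist_Suc[OF n1] set_bind_pmf set_map_pmf by blast
      show ?thesis unfolding G' using inv_step[OF n1 _ step_support[OF n1 F oc]] iv F by blast
    qed
    then show ?thesis using f2 by blast
  qed
qed



lemma pnext_affine:
  assumes "n \<ge> 1" "F \<in> set_pmf (urn_dist p \<alpha> n)"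
  shows "urn_pnext p \<alpha> n F = (1 - (1 - p) * real n / urn_den p \<alpha> n) + (- (1 - p) * \<alpha> / urn_den p \<alpha> n) * Bn n F"
proof -
  have "urn_inv n F" using dist_inv[OF assms(1)] assms(2) by blast
  then have Fs: "(\<Sum>i=1..n. real i * real (F i)) = real n" unfolding urn_inv_def by auto
  have "(\<Sum>i=1..n. (real i + \<alpha>) * real (F i)) = (\<Sum>i=1..n. real i * real (F i)) + \<alpha> * Bn n F"
    unfolding Bn_def by (simp add: algebra_simps sum.distrib sum_distrib_left)
  then have "(\<Sum>i=1..n. (real i + \<alpha>) * real (F i)) = real n + \<alpha> * Bn n F" using Fs by simp
  then show ?thesis unfolding urn_pnext_def by (simp add: diff_divide_distrib add_divide_distrib algebra_simps)
qed

lemma exp_pnext: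
  assumes n: "n \<ge> 1" and EB: "measure_pmf.expectation (urn_dist p \<alpha> n) (Bn n) = 1 + (real n - 1) * p"
  shows "measure_pmf.expectation (urn_dist p \<alpha> n) (urn_pnext p \<alpha> n) = p"
proof -
  have d: "urn_den p \<alpha> n > 0" using den_pos[OF p0 p1 a1 n] .
  have fin: "finite (set_pmf (urn_dist p \<alpha> n))" using dist_inv[OF n] by blast
  have "measure_pmf.expectation (urn_dist p \<alpha> n) (urn_pnext p \<alpha> n)
     = measure_pmf.expectation (urn_dist p \<alpha> n) (\<lambda>F. (1 - (1 - p) * real n / urn_den p \<alpha> n) + (- (1 - p) * \<alpha> / urn_den p \<alpha> n) * Bn n F)"
    by (rule exp_cong_pmf) (rule pnext_affine[OF n])
  also have "\<dots> = (1 - (1 - p) * real n / urn_den p \<alpha> n) + (- (1 - p) * \<alpha> / urn_den p \<alpha> n) * (1 + (real n - 1) * p)"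
    by (subst exp_affine[OF fin]) (simp add: EB)
  also have "\<dots> = 1 - (1 - p) * (real n + \<alpha> * (1 + (real n - 1) * p)) / urn_den p \<alpha> n"
    using d by (simp add: field_simps)
  also have "real n + \<alpha> * (1 + (real n - 1) * p) = urn_den p \<alpha> n"
    unfolding urn_den_def by (simp add: algebra_simps)
  finally show ?thesis using d by simp
qed

lemma exp_B:
  "n \<ge> 1 \<Longrightarrow> measure_pmf.expectation (urn_dist p \<alpha> n) (Bn n) = 1 + (real n - 1) * p"
proof (induction n)
  case 0 then show ?case by simp
next
  case (Suc n)
  show ?case
  proof (cases "n = 0")
    case True then show ?thesis by (simp add: Bn_def urn_init_def)
  next
    case False
    then have n1: "n \<ge> 1" by simp
    have IH: "measure_pmf.expectation (urn_dist p \<alpha> n) (Bn n) = 1 + (real n - 1) * p"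
      using Suc.IH[OF n1] .
    have fin: "finite (set_pmf (urn_dist p \<alpha> n))" using dist_inv[OF n1] by blast
    have inner: "measure_pmf.expectation (map_pmf (urn_apply F) (urn_step_pmf p \<alpha> n F)) (Bn (Suc n))
        = Bn n F + urn_pnext p \<alpha> n F" if F: "F \<in> set_pmf (urn_dist p \<alpha> n)" for F
    proof -
      have iv: "urn_inv n F" using dist_inv[OF n1] F by blast
      have finS: "finite (set_pmf (urn_step_pmf p \<alpha> n F))" using step_finite[OF n1 F] .
      have "measure_pmf.expectation (map_pmf (urn_apply F) (urn_step_pmf p \<alpha> n F)) (Bn (Suc n))
          = measure_pmf.expectation (urn_step_pmf p \<alpha> n F) (\<lambda>oc. Bn (Suc n) (urn_apply F oc))"
        by simp
      also have "\<dots> = measure_pmf.expectation (urn_step_pmf p \<alpha> n F) (\<lambda>oc. Bn n F + 1 * indicator {None} oc)"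
      proof (rule exp_cong_pmf)
        fix oc assume oc: "oc \<in> set_pmf (urn_step_pmf p \<alpha> n F)"
        show "Bn (Suc n) (urn_apply F oc) = Bn n F + 1 * indicator {None} oc"
          using inv_step[OF n1 iv step_support[OF n1 F oc]] unfolding Bn_def
          by (auto simp: indicator_def)
      qed
      also have "\<dots> = Bn n F + 1 * measure_pmf.expectation (urn_step_pmf p \<alpha> n F) (indicator {None})"
        by (rule exp_affine[OF finS])
      also have "measure_pmf.expectation (urn_step_pmf p \<alpha> n F) (indicator {None}) = pmf (urn_step_pmf p \<alpha> n F) None"
        by (simp add: measure_pmf_single)
      also have "\<dots> = urn_pnext p \<alpha> n F" using step_pmf[OF n1 F] by (simp add: sf_def)
      finally show ?thesis by simp
    qed
    have "measure_pmf.expectation (urn_dist p \<alpha> (Suc n)) (Bn (Suc n))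
        = measure_pmf.expectation (urn_dist p \<alpha> n)
            (\<lambda>F. measure_pmf.expectation (map_pmf (urn_apply F) (urn_step_pmf p \<alpha> n F)) (Bn (Suc n)))"
      unfolding urn_dist_Suc[OF n1]
      by (rule exp_bind_fin[OF fin]) (use step_finite[OF n1] in simp)
    also have "\<dots> = measure_pmf.expectation (urn_dist p \<alpha> n) (\<lambda>F. Bn n F + urn_pnext p \<alpha> n F)"
      by (rule exp_cong_pmf) (rule inner)
    also have "\<dots> = measure_pmf.expectation (urn_dist p \<alpha> n) (Bn n) + measure_pmf.expectation (urn_dist p \<alpha> n) (urn_pnext p \<alpha> n)"
      by (rule Bochner_Integration.integral_add) (use fin integrable_measure_pmf_finite in auto)
    also have "\<dots> = 1 + (real (Suc n) - 1) * p" using IH exp_pnext[OF n1 IH] by (simp add: algebra_simps)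
    finally show ?thesis .
  qed
qed

end

theorem lemmaA1:
  fixes p \<alpha> :: real and k :: nat
  assumes "0 < p" and "p < 1" and "\<alpha> > -1"
    and well_defined: "\<forall>j\<ge>1. \<forall>F\<in>set_pmf (urn_dist p \<alpha> j).
                          0 \<le> urn_pnext p \<alpha> j F \<and> urn_pnext p \<alpha> j F \<le> 1"
    and "k > 1"
  shows "measure_pmf.expectation (urn_dist p \<alpha> k) (\<lambda>F. infsum (\<lambda>i. real (F i)) {1..})
           = 1 + (real k - 1) * p
       \<and> measure_pmf.expectation (urn_dist p \<alpha> k) (\<lambda>F. \<Sum>i=1..k. real (F i))
           = 1 + (real k - 1) * p
       \<and> measure_pmf.expectation (urn_dist p \<alpha> (k - 1)) (\<lambda>F. urn_pnext p \<alpha> (k - 1) F) = p"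
proof -
  have k1: "k \<ge> 1" and k2: "k - 1 \<ge> 1" using assms(5) by auto
  have EB: "measure_pmf.expectation (urn_dist p \<alpha> k) (Bn k) = 1 + (real k - 1) * p"
    using exp_B[OF assms(1,2,3) well_defined k1] .
  have eq2: "(\<lambda>F. \<Sum>i=1..k. real (F i)) = Bn k" by (rule ext) (simp add: Bn_def)
  have c1: "measure_pmf.expectation (urn_dist p \<alpha> k) (\<lambda>F. infsum (\<lambda>i. real (F i)) {1..})
      = measure_pmf.expectation (urn_dist p \<alpha> k) (Bn k)"
  proof (rule exp_cong_pmf)
    fix F assume F: "F \<in> set_pmf (urn_dist p \<alpha> k)"
    have "urn_inv k F" using dist_inv[OF assms(1,2,3) well_defined k1] F by blast
    then have z: "\<And>i. i > k \<Longrightarrow> F i = 0" unfolding urn_inv_def by auto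
    have "infsum (\<lambda>i. real (F i)) {1..} = infsum (\<lambda>i. real (F i)) {1..k}"
      by (rule infsum_cong_neutral) (auto simp: z)
    then show "infsum (\<lambda>i. real (F i)) {1..} = Bn k F" by (simp add: Bn_def)
  qed
  have c3: "measure_pmf.expectation (urn_dist p \<alpha> (k - 1)) (urn_pnext p \<alpha> (k - 1)) = p"
    using exp_pnext[OF assms(1,2,3) well_defined k2 exp_B[OF assms(1,2,3) well_defined k2]] .
  show ?thesis using EB c1 c3 unfolding eq2 by simp
qed

end
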